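(* A tree $T$ is skew-nontrivial (i.e., $\check T=T$) if and only if the distance between each pair of leaves of $T$ is even.
   Context: Skew forcing: vertices are colored blue or white; if any vertex $u$ (blue or white) has exactly one white neighbor $v$, then $u$ may force $v$ to become blue. The skew-nontrivial subgraph $\check G$ of a graph $G$ is obtained as follows: starting with no blue vertices, apply the skew forcing rule until no more forces are possible; then delete every blue vertex all of whose neighbors are blue, and delete every edge both of whose endpoints are blue. $G$ is skew-nontrivial if $\check G=G$. *)

theory Defs
  imports Main
begin

definition graph :: "'a set \<Rightarrow> ('a \<Rightarrow> 'a \<Rightarrow> bool) \<Rightarrow> bool" where
  "graph V E \<longleftrightarrow> finite V \<and> (\<forall>u v. E u v \<longrightarrow> u \<in> V \<and> v \<in> V)
     \<and> (\<forall>u v. E u v \<longrightarrow> E v u) \<and> (\<forall>u. \<not> E u u)"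

definition walk :: "'a set \<Rightarrow> ('a \<Rightarrow> 'a \<Rightarrow> bool) \<Rightarrow> 'a list \<Rightarrow> bool" where
  "walk V E xs \<longleftrightarrow> xs \<noteq> [] \<and> set xs \<subseteq> V \<and> successively E xs"

definition connected_graph :: "'a set \<Rightarrow> ('a \<Rightarrow> 'a \<Rightarrow> bool) \<Rightarrow> bool" where
  "connected_graph V E \<longleftrightarrow>
     (\<forall>u\<in>V. \<forall>v\<in>V. \<exists>xs. walk V E xs \<and> hd xs = u \<and> last xs = v)"

definition is_cycle :: "'a set \<Rightarrow> ('a \<Rightarrow> 'a \<Rightarrow> bool) \<Rightarrow> 'a list \<Rightarrow> bool" where
  "is_cycle V E xs \<longleftrightarrow> walk V E xs \<and> distinct xs \<and> length xs \<ge> 3 \<and> E (last xs) (hd xs)"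

definition tree :: "'a set \<Rightarrow> ('a \<Rightarrow> 'a \<Rightarrow> bool) \<Rightarrow> bool" where
  "tree V E \<longleftrightarrow> graph V E \<and> V \<noteq> {} \<and> connected_graph V E \<and> (\<nexists>xs. is_cycle V E xs)"

definition gdist :: "'a set \<Rightarrow> ('a \<Rightarrow> 'a \<Rightarrow> bool) \<Rightarrow> 'a \<Rightarrow> 'a \<Rightarrow> nat" where
  "gdist V E u v = (LEAST n. \<exists>xs. walk V E xs \<and> hd xs = u \<and> last xs = v \<and> length xs = Suc n)"

definition leaf :: "'a set \<Rightarrow> ('a \<Rightarrow> 'a \<Rightarrow> bool) \<Rightarrow> 'a \<Rightarrow> bool" where
  "leaf V E v \<longleftrightarrow> v \<in> V \<and> card {w \<in> V. E v w} = 1"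

text \<open>One skew force: some vertex u (blue or white) has exactly one white
  neighbour v (B = set of blue vertices); v becomes blue.\<close>
definition skew_force :: "'a set \<Rightarrow> ('a \<Rightarrow> 'a \<Rightarrow> bool) \<Rightarrow> 'a set \<Rightarrow> 'a set \<Rightarrow> bool" where
  "skew_force V E B B' \<longleftrightarrow>
     (\<exists>u\<in>V. \<exists>v. {w \<in> V. E u w} - B = {v} \<and> B' = insert v B)"

definition skew_final :: "'a set \<Rightarrow> ('a \<Rightarrow> 'a \<Rightarrow> bool) \<Rightarrow> 'a set \<Rightarrow> bool" where
  "skew_final V E B \<longleftrightarrow> (skew_force V E)\<^sup>*\<^sup>* {} B \<and> (\<nexists>B'. skew_force V E B B')"

definition skew_check_vertices :: "'a set \<Rightarrow> ('a \<Rightarrow> 'a \<Rightarrow> bool) \<Rightarrow> 'a set \<Rightarrow> 'a set" where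
  "skew_check_vertices V E B = V - {x \<in> B. \<forall>w. E x w \<longrightarrow> w \<in> B}"

definition skew_check_edges :: "('a \<Rightarrow> 'a \<Rightarrow> bool) \<Rightarrow> 'a set \<Rightarrow> 'a \<Rightarrow> 'a \<Rightarrow> bool" where
  "skew_check_edges E B = (\<lambda>x y. E x y \<and> \<not> (x \<in> B \<and> y \<in> B))"

definition skew_nontrivial :: "'a set \<Rightarrow> ('a \<Rightarrow> 'a \<Rightarrow> bool) \<Rightarrow> bool" where
  "skew_nontrivial V E \<longleftrightarrow>
     (\<forall>B. skew_final V E B \<longrightarrow> skew_check_vertices V E B = V \<and> skew_check_edges E B = E)"

end

theory Submission
  imports Defs
begin

lemma closed_walk_cycle:
  assumes g: "graph V E"
  shows "walk V E xs \<Longrightarrow> hd xs = last xs \<Longrightarrow> even (length xs) \<Longrightarrow> \<exists>ys. is_cycle V E ys"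
proof (induction "length xs" arbitrary: xs rule: less_induct)
  case less
  have irr: "\<And>u. \<not> E u u" and sym: "\<And>u v. E u v \<Longrightarrow> E v u" using g by (auto simp: graph_def)
  have ne: "xs \<noteq> []" using less.prems by (auto simp: walk_def)
  have xs_eq: "xs = butlast xs @ [last xs]" using ne by simp
  have sx: "successively E xs" and setx: "set xs \<subseteq> V" using less.prems by (auto simp: walk_def)
  show ?case
  proof (cases "distinct (butlast xs)")
    case True
    have l2: "length xs \<noteq> 2"
    proof
      assume "length xs = 2"
      then obtain a b where "xs = [a,b]"
        by (metis (no_types, opaque_lifting) One_nat_def Suc_1 length_0_conv length_Suc_conv)
      with less.prems sx irr show False by auto
    qed
    have "length xs > 0" using ne by simp
    hence l4: "length xs \<ge> 4" using l2 less.prems(3) by presburger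
    define ys where "ys = butlast xs"
    have ysne: "ys \<noteq> []" using l4 ys_def by (cases xs) auto
    have s2: "successively E (ys @ [last xs])" using sx xs_eq ys_def by simp
    hence "successively E ys" "E (last ys) (last xs)" using ysne
      by (auto simp: successively_append_iff)
    moreover have "hd ys = hd xs" using ysne ys_def xs_eq by (metis hd_append2)
    moreover have "set ys \<subseteq> V" using setx ys_def by (meson in_set_butlastD subset_iff)
    ultimately have "is_cycle V E ys" using True l4 ys_def less.prems(2) ysne
      by (auto simp: is_cycle_def walk_def)
    thus ?thesis by blast
  next
    case False
    then obtain a x b c where d: "butlast xs = a @ [x] @ b @ [x] @ c"
      using not_distinct_decomp by blast
    define l where "l = last xs"
    have xe: "xs = a @ [x] @ b @ [x] @ c @ [l]" using d xs_eq l_def by simp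
    have hl: "hd xs = l" using less.prems(2) l_def by simp
    define p where "p = x # b @ [x]"
    define q where "q = a @ [x] @ c @ [l]"
    have xe2: "xs = a @ p @ c @ [l]" unfolding xe p_def by simp
    have sp: "successively E p" using sx unfolding xe2
      by (simp add: successively_append_iff)
    have xe3: "xs = (a @ [x]) @ (b @ [x] @ c @ [l])" unfolding xe by simp
    have s1: "successively E (a @ [x])" using sx unfolding xe3
      by (simp only: successively_append_iff)
    have xe4: "xs = (a @ [x] @ b) @ ([x] @ c @ [l])" unfolding xe by simp
    have s2: "successively E ([x] @ c @ [l])" using sx unfolding xe4
      by (simp only: successively_append_iff)
    have "q = (a @ [x]) @ (c @ [l])" unfolding q_def by simp
    moreover have "successively E (c @ [l])" using s2 by (simp add: successively_Cons)
    moreover have "E x (hd (c @ [l]))" using s2 by (cases c) auto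
    ultimately have sq: "successively E q" using s1
      by (simp add: successively_append_iff del: append_assoc)
    have "set p \<subseteq> V" "set q \<subseteq> V" using setx unfolding xe p_def q_def by auto
    hence wp: "walk V E p" and wq: "walk V E q" using sp sq by (auto simp: walk_def p_def q_def)
    have hp: "hd p = last p" by (simp add: p_def)
    have hq: "hd q = last q" using hl xe q_def by (cases a) auto
    have lens: "length p < length xs" "length q < length xs" unfolding p_def q_def xe by auto
    have "even (length p) \<or> even (length q)" using less.prems(3) unfolding p_def q_def xe by auto
    thus ?thesis using less.hyps lens wp wq hp hq by blast
  qed
qed


lemma tree_no_odd_closed:
  assumes t: "tree V E" and "walk V E xs" "hd xs = last xs" "even (length xs)"
  shows False
  using closed_walk_cycle[of V E xs] assms by (auto simp: tree_def)

lemma same_parity: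
  assumes t: "tree V E" and wp: "walk V E p" and wq: "walk V E q"
    and h: "hd p = hd q" and l: "last p = last q"
  shows "even (length p) = even (length q)"
proof (rule ccontr)
  assume np: "even (length p) \<noteq> even (length q)"
  have g: "graph V E" using t by (simp add: tree_def)
  have sym: "\<And>u v. E u v \<Longrightarrow> E v u" using g by (auto simp: graph_def)
  have pne: "p \<noteq> []" and qne: "q \<noteq> []" using wp wq by (auto simp: walk_def)
  have sp: "successively E p" and sq: "successively E q" using wp wq by (auto simp: walk_def)
  have "successively (\<lambda>x y. E y x) q" using sq by (rule successively_mono) (auto intro: sym)
  hence srq: "successively E (rev q)" by simp
  have rq: "rev q = last p # tl (rev q)" using qne l by (cases "rev q") (auto simp: last_rev[symmetric])
  define r where "r = p @ tl (rev q)"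
  have r2: "r = butlast p @ rev q" unfolding r_def using pne rq
    by (metis append.assoc append_Cons append_butlast_last_id self_append_conv2)
  have "successively E r"
  proof (cases "butlast p = []")
    case True then show ?thesis using r2 srq by simp
  next
    case False
    have pp: "p = butlast p @ [last p]" using pne by simp
    have "E (last (butlast p)) (last p)" using sp False
      by (metis pp successively_append_iff last_ConsL list.distinct(1) hd_Cons_tl
          list.sel(1) snoc_eq_iff_butlast)
    moreover have "successively E (butlast p)" using sp pp
      by (metis successively_append_iff)
    ultimately show ?thesis unfolding r2 using srq rq
      by (subst successively_append_iff) (metis list.sel(1))
  qed
  moreover have "set (tl (rev q)) \<subseteq> set q" using qne
    by (metis list.set_sel(2) rev_is_Nil_conv set_rev subsetI tl_Nil)
  hence "set r \<subseteq> V" using wp wq unfolding r_def walk_def by auto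
  ultimately have wr: "walk V E r" using pne by (auto simp: walk_def r_def)
  have "hd r = last r"
  proof (cases "tl (rev q) = []")
    case True
    then show ?thesis using rq h pne qne l unfolding r_def
      by (metis append.right_neutral hd_rev last.simps list.sel(3) rev_singleton_conv)
  next
    case False
    have "last (tl (rev q)) = hd q" using False qne
      by (metis last_rev last_tl)
    then show ?thesis using False h pne unfolding r_def by simp
  qed
  moreover have "length r = length p + length q - 1" unfolding r_def using qne by (cases q) auto
  hence "even (length r)" using np pne qne by (cases "length q") auto
  ultimately show False using tree_no_odd_closed[OF t wr] by blast
qed

lemma gdist_witness:
  assumes t: "tree V E" and "u \<in> V" "v \<in> V"
  shows "\<exists>p. walk V E p \<and> hd p = u \<and> last p = v \<and> length p = Suc (gdist V E u v)"
proof -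
  obtain xs where "walk V E xs" "hd xs = u" "last xs = v"
    using assms unfolding tree_def connected_graph_def by blast
  moreover have "length xs = Suc (length xs - 1)" using \<open>walk V E xs\<close>
    by (cases xs) (auto simp: walk_def)
  ultimately have "\<exists>n xs. walk V E xs \<and> hd xs = u \<and> last xs = v \<and> length xs = Suc n" by blast
  from LeastI_ex[OF this] show ?thesis unfolding gdist_def by blast
qed

lemma gdist_parity:
  assumes t: "tree V E" and w: "walk V E p" and "hd p = u" "last p = v"
  shows "even (gdist V E u v) \<longleftrightarrow> odd (length p)"
proof -
  have "u \<in> V" "v \<in> V" using w assms(3,4) by (auto simp: walk_def)
  then obtain q where "walk V E q" "hd q = u" "last q = v" "length q = Suc (gdist V E u v)"
    using gdist_witness[OF t] by blast
  with same_parity[OF t w this(1)] assms show ?thesis by simp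
qed


lemma walk_snoc:
  assumes "walk V E p" "E (last p) w" "w \<in> V"
  shows "walk V E (p @ [w])"
  using assms by (auto simp: walk_def successively_append_iff)

lemma backward:
  assumes t: "tree V E"
    and H: "\<forall>u v. leaf V E u \<and> leaf V E v \<longrightarrow> even (gdist V E u v)"
  shows "skew_nontrivial V E"
proof -
  have g: "graph V E" using t by (simp add: tree_def)
  have sym: "\<And>u v. E u v \<Longrightarrow> E v u" and inV: "\<And>u v. E u v \<Longrightarrow> u \<in> V \<and> v \<in> V"
    and irr: "\<And>u. \<not> E u u" using g by (auto simp: graph_def)
  have conn: "\<And>u v. u \<in> V \<Longrightarrow> v \<in> V \<Longrightarrow> \<exists>xs. walk V E xs \<and> hd xs = u \<and> last xs = v"
    using t unfolding tree_def connected_graph_def by blast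
  show ?thesis
  proof (cases "\<exists>r. leaf V E r")
    case False
    have "B = {}" if "(skew_force V E)\<^sup>*\<^sup>* {} B" for B
      using that
    proof (induction rule: rtranclp_induct)
      case base then show ?case by simp
    next
      case (step B B')
      then obtain u v where "u \<in> V" "{w \<in> V. E u w} = {v}" by (auto simp: skew_force_def)
      hence "leaf V E u" by (simp add: leaf_def)
      with False show ?case by blast
    qed
    then show ?thesis
      by (auto simp: skew_nontrivial_def skew_final_def skew_check_vertices_def skew_check_edges_def)
  next
    case True
    then obtain r where r: "leaf V E r" by blast
    hence rV: "r \<in> V" by (simp add: leaf_def)
    define S where "S = {x \<in> V. \<exists>p. walk V E p \<and> hd p = r \<and> last p = x \<and> even (length p)}"
    have Sind: "w \<notin> S" if "x \<in> S" "E x w" for x w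
    proof
      assume "w \<in> S"
      then obtain q where q: "walk V E q" "hd q = r" "last q = w" "even (length q)"
        by (auto simp: S_def)
      obtain p where p: "walk V E p" "hd p = r" "last p = x" "even (length p)"
        using \<open>x \<in> S\<close> by (auto simp: S_def)
      have "walk V E (p @ [w])" using walk_snoc[OF p(1)] p(3) that(2) inV by auto
      moreover have "hd (p @ [w]) = r" using p by (cases p) (auto simp: walk_def)
      ultimately show False using same_parity[OF t _ q(1)] q p by fastforce
    qed
    have inv: "B \<subseteq> S \<and> (\<forall>x\<in>B. \<exists>w. E x w)" if "(skew_force V E)\<^sup>*\<^sup>* {} B" for B
      using that
    proof (induction rule: rtranclp_induct)
      case base then show ?case by simp
    next
      case (step B B')
      then obtain u v where u: "u \<in> V" "{w \<in> V. E u w} - B = {v}" and B': "B' = insert v B"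
        by (auto simp: skew_force_def)
      have uv: "E u v" using u by auto
      have "v \<in> S"
      proof (rule ccontr)
        assume vS: "v \<notin> S"
        obtain p where p: "walk V E p" "hd p = r" "last p = u" using conn[OF rV u(1)] by blast
        show False
        proof (cases "even (length p)")
          case True
          hence uS: "u \<in> S" using p u by (auto simp: S_def)
          have "w \<notin> B" if "E u w" for w using Sind[OF uS that] step.IH by auto
          hence "{w \<in> V. E u w} = {v}" using u(2) by auto
          hence "leaf V E u" using u by (simp add: leaf_def)
          hence "even (gdist V E r u)" using H r by blast
          then show False using gdist_parity[OF t p] True by simp
        next
          case False
          have "walk V E (p @ [v])" using walk_snoc[OF p(1)] p(3) uv inV by auto
          moreover have "hd (p @ [v]) = r" using p by (cases p) (auto simp: walk_def)
          ultimately have "v \<in> S" using False inV[OF uv] by (auto simp: S_def)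
          with vS show False by simp
        qed
      qed
      then show ?case using step.IH B' uv sym by blast
    qed
    show ?thesis unfolding skew_nontrivial_def
    proof (intro allI impI conjI)
      fix B assume "skew_final V E B"
      hence BS: "B \<subseteq> S" and nb: "\<forall>x\<in>B. \<exists>w. E x w" using inv by (auto simp: skew_final_def)
      show "skew_check_vertices V E B = V"
      proof -
        have "\<not> (\<forall>w. E x w \<longrightarrow> w \<in> B)" if "x \<in> B" for x
          using nb that BS Sind by blast
        then show ?thesis unfolding skew_check_vertices_def by auto
      qed
      show "skew_check_edges E B = E"
        unfolding skew_check_edges_def using BS Sind by (intro ext) blast
    qed
  qed
qed


lemma final_exists:
  assumes g: "graph V E"
  shows "\<exists>B. skew_final V E B"
proof -
  have fin: "finite V" using g by (simp add: graph_def)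
  have sub: "B \<subseteq> V" if "(skew_force V E)\<^sup>*\<^sup>* {} B" for B
    using that by (induction rule: rtranclp_induct) (auto simp: skew_force_def)
  define P where "P n = (\<exists>B. (skew_force V E)\<^sup>*\<^sup>* {} B \<and> card B = n)" for n
  have "P 0" by (auto simp: P_def)
  moreover have "\<forall>y. P y \<longrightarrow> y \<le> card V" using sub fin by (auto simp: P_def card_mono)
  ultimately obtain n where "P n" and mx: "\<forall>y. P y \<longrightarrow> y \<le> n"
    using Nat.ex_has_greatest_nat[of P 0 "card V"] by blast
  then obtain B where B: "(skew_force V E)\<^sup>*\<^sup>* {} B" "card B = n" by (auto simp: P_def)
  have "\<nexists>B'. skew_force V E B B'"
  proof
    assume "\<exists>B'. skew_force V E B B'"
    then obtain B' where f: "skew_force V E B B'" by blast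
    then obtain u v where "{w \<in> V. E u w} - B = {v}" "B' = insert v B"
      by (auto simp: skew_force_def)
    hence "v \<notin> B" "B' = insert v B" by auto
    moreover have "finite B" using sub[OF B(1)] fin finite_subset by blast
    ultimately have "card B' = Suc n" using B by simp
    moreover have "(skew_force V E)\<^sup>*\<^sup>* {} B'" using B(1) f by simp
    ultimately show False using mx unfolding P_def by force
  qed
  with B show ?thesis by (auto simp: skew_final_def)
qed

lemma alt_walk:
  "successively R xs \<Longrightarrow> (\<forall>x y. R x y \<longrightarrow> (x \<in> B \<longleftrightarrow> y \<notin> B)) \<Longrightarrow> xs \<noteq> []
   \<Longrightarrow> ((hd xs \<in> B) = (last xs \<in> B)) = odd (length xs)"
proof (induction xs)
  case Nil then show ?case by simp
next
  case (Cons x xs)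
  show ?case
  proof (cases "xs = []")
    case True then show ?thesis by simp
  next
    case False
    have "R x (hd xs)" "successively R xs" using Cons.prems False by (auto simp: successively_Cons)
    then show ?thesis using Cons.IH Cons.prems(2) False by auto
  qed
qed

lemma forward:
  assumes t: "tree V E" and nt: "skew_nontrivial V E"
    and lu: "leaf V E u" and lv: "leaf V E v"
  shows "even (gdist V E u v)"
proof -
  have g: "graph V E" using t by (simp add: tree_def)
  have sym: "\<And>u v. E u v \<Longrightarrow> E v u" and inV: "\<And>u v. E u v \<Longrightarrow> u \<in> V \<and> v \<in> V"
    and irr: "\<And>u. \<not> E u u" and fin: "finite V" using g by (auto simp: graph_def)
  have nocyc: "\<And>xs. \<not> is_cycle V E xs" using t by (simp add: tree_def)
  obtain B where fB: "skew_final V E B" using final_exists[OF g] by blast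
  have nf: "\<And>x w. x \<in> V \<Longrightarrow> {y \<in> V. E x y} - B \<noteq> {w}"
    using fB unfolding skew_final_def skew_force_def by blast
  have ce: "skew_check_edges E B = E" using nt fB by (simp add: skew_nontrivial_def)
  have Bind: "\<not> (x \<in> B \<and> y \<in> B)" if "E x y" for x y
    using fun_cong[OF fun_cong[OF ce, of x], of y] that by (simp add: skew_check_edges_def)
  have Wind: False if e: "E x0 y0" "x0 \<notin> B" "y0 \<notin> B" for x0 y0
  proof -
    have "\<exists>xs. distinct xs \<and> length xs = k + 2 \<and> walk V E xs \<and> set xs \<inter> B = {}" for k
    proof (induction k)
      case 0
      have "walk V E [x0, y0]" using e inV by (auto simp: walk_def)
      then show ?case using e irr by (intro exI[of _ "[x0,y0]"]) auto
    next
      case (Suc k)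
      then obtain xs where xs: "distinct xs" "length xs = k + 2" "walk V E xs" "set xs \<inter> B = {}"
        by blast
      then obtain x y rest where xe: "xs = x # y # rest"
        by (metis add_2_eq_Suc' length_Suc_conv)
      have exy: "E x y" using xs(3) xe by (simp add: walk_def)
      have xV: "x \<in> V" using xs(3) xe by (simp add: walk_def)
      have "y \<in> {w \<in> V. E x w} - B" using exy inV xs(4) xe by auto
      moreover have "{w \<in> V. E x w} - B \<noteq> {y}" using nf xV by blast
      ultimately obtain z where z: "z \<in> V" "E x z" "z \<notin> B" "z \<noteq> y" by blast
      show ?case
      proof (cases "z \<in> set xs")
        case False
        have "walk V E (z # xs)" using xs(3) xe z sym by (auto simp: walk_def)
        then show ?thesis using False xs z by (intro exI[of _ "z # xs"]) auto
      next
        case True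
        have "z \<noteq> x" using z irr by auto
        hence "z \<in> set rest" using True xe z by auto
        then obtain r1 r2 where rs: "rest = r1 @ z # r2" by (meson split_list)
        define c where "c = x # y # r1 @ [z]"
        have "successively E xs" using xs(3) by (simp add: walk_def)
        hence "successively E ((x # y # r1 @ [z]) @ r2)" using xe rs by simp
        hence "successively E c" unfolding c_def by (simp only: successively_append_iff)
        moreover have "set c \<subseteq> V" using xs(3) xe rs c_def by (auto simp: walk_def)
        moreover have "distinct c" using xs(1) xe rs c_def by auto
        moreover have "E (last c) (hd c)" using z sym c_def by simp
        ultimately have "is_cycle V E c" by (auto simp: is_cycle_def walk_def c_def)
        with nocyc show ?thesis by blast
      qed
    qed
    then obtain xs where xs: "distinct xs" "length xs = card V + 2" "walk V E xs" by blast
    have "card (set xs) \<le> card V" using xs(3) fin by (simp add: walk_def card_mono)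
    with xs show False using distinct_card by fastforce
  qed
  have alt: "\<forall>x y. E x y \<longrightarrow> (x \<in> B \<longleftrightarrow> y \<notin> B)" using Bind Wind by blast
  have lw: "w \<notin> B" if lw: "leaf V E w" for w
  proof
    assume wB: "w \<in> B"
    have wV: "w \<in> V" using lw by (simp add: leaf_def)
    obtain p where np: "{y \<in> V. E w y} = {p}" using lw by (auto simp: leaf_def card_1_singleton_iff)
    have "p \<in> B" using nf[OF wV, of p] np by auto
    moreover have "E w p" using np by auto
    ultimately show False using Bind wB by blast
  qed
  have "u \<in> V" "v \<in> V" using lu lv by (auto simp: leaf_def)
  then obtain p where p: "walk V E p" "hd p = u" "last p = v" "length p = Suc (gdist V E u v)"
    using gdist_witness[OF t] by blast
  have "odd (length p)" using alt_walk[of E p B] p alt lw[OF lu] lw[OF lv]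
    by (auto simp: walk_def)
  with p(4) show ?thesis by simp
qed

theorem proposition5p25:
  fixes V :: "'a set" and E :: "'a \<Rightarrow> 'a \<Rightarrow> bool"
  assumes "tree V E"
  shows "skew_nontrivial V E \<longleftrightarrow>
           (\<forall>u v. leaf V E u \<and> leaf V E v \<longrightarrow> even (gdist V E u v))"
  using forward[OF assms] backward[OF assms] by blast

end
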